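(* Let $\kappa:=\sup_{x\in X}\sqrt{K(x,x)}<\infty$ and $|V|_0:=\sup_{y\in Y}V(y,0)<\infty$. Assume that for every $y\in Y$ the function $V(y,\cdot)$ is differentiable with derivative $V'(y,\cdot)$ Lipschitz with constant $L>0$, and that $0<\eta_t\le(L\kappa^2)^{-1}$ for all $t$. Then for every $t\ge1$, $\|f_{t+1}\|_K\le\sqrt{2|V|_0\sum_{k=1}^t\eta_k}$. In particular, if $\eta_t=\eta_1t^{-\theta}$ with $\theta\in[0,1)$ and $0<\eta_1\le\min\{\frac{1-\theta}{2|V|_0},(L\kappa^2)^{-1}\}$, then $\|f_{t+1}\|_K\le t^{\frac{1-\theta}{2}}$ for every $t\ge1$.
   Context: Setting. $X$ is a separable metric space, $Y\subseteq\mathbb{R}$, and $V:\mathbb{R}\times\mathbb{R}\to[0,\infty)$ is a measurable loss, convex in its second argument. A sample $\mathbf{z}=\{(x_i,y_i)\}_{i=1}^m\subset X\times Y$ is given, and $\mathcal{E}_{\mathbf z}(f)=\frac1m\sum_{i=1}^m V(y_i,f(x_i))$ is the empirical risk. $K:X\times X\to\mathbb{R}$ is a reproducing kernel with reproducing kernel Hilbert space $(\mathcal{H}_K,\|\cdot\|_K)$, $K_x=K(x,\cdot)$. Given step sizes $\eta_t>0$, the iterates are $f_1=0$ and $f_{t+1}=f_t-\eta_t\frac1m\sum_{j=1}^m V'(y_j,f_t(x_j))K_{x_j}$, $t\ge1$ (here $V'$ is the derivative in the second argument). *)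

theory Defs
  imports "HOL-Analysis.Analysis"
begin

definition reproducing_kernel :: "('x \<Rightarrow> 'x \<Rightarrow> real) \<Rightarrow> bool" where
  "reproducing_kernel K \<longleftrightarrow>
     (\<forall>x y. K x y = K y x) \<and>
     (\<forall>ps :: 'x list. \<forall>cs :: real list. length cs = length ps \<longrightarrow>
        0 \<le> (\<Sum>i<length ps. \<Sum>j<length ps. cs!i * cs!j * K (ps!i) (ps!j)))"

definition kernel_comb :: "('x \<Rightarrow> 'x \<Rightarrow> real) \<Rightarrow> 'x list \<Rightarrow> real list \<Rightarrow> 'x \<Rightarrow> real" where
  "kernel_comb K ps cs = (\<lambda>x. \<Sum>i<length ps. cs!i * K (ps!i) x)"

text \<open>RKHS norm of an element of span of kernel sections (the dense subspace of H_K):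
  the square root of c^T G c for a representation (independent of the representation).\<close>
definition rkhs_norm :: "('x \<Rightarrow> 'x \<Rightarrow> real) \<Rightarrow> ('x \<Rightarrow> real) \<Rightarrow> real" where
  "rkhs_norm K f = sqrt (Inf {(\<Sum>i<length ps. \<Sum>j<length ps. cs!i * cs!j * K (ps!i) (ps!j)) | ps cs.
       length cs = length ps \<and> f = kernel_comb K ps cs})"

text \<open>Gradient descent iterates; gd_aux n is f_{n+1}, so f_1 = 0.\<close>
primrec gd_aux :: "('x \<Rightarrow> 'x \<Rightarrow> real) \<Rightarrow> (real \<Rightarrow> real \<Rightarrow> real) \<Rightarrow> (nat \<Rightarrow> real)
    \<Rightarrow> nat \<Rightarrow> (nat \<Rightarrow> 'x) \<Rightarrow> (nat \<Rightarrow> real) \<Rightarrow> nat \<Rightarrow> 'x \<Rightarrow> real" where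
  "gd_aux K V' \<eta> m xs ys 0 = (\<lambda>x. 0)"
| "gd_aux K V' \<eta> m xs ys (Suc n) = (\<lambda>x. gd_aux K V' \<eta> m xs ys n x
     - \<eta> (Suc n) * (1 / real m) * (\<Sum>j<m. V' (ys j) (gd_aux K V' \<eta> m xs ys n (xs j)) * K (xs j) x))"

definition gd_iter :: "('x \<Rightarrow> 'x \<Rightarrow> real) \<Rightarrow> (real \<Rightarrow> real \<Rightarrow> real) \<Rightarrow> (nat \<Rightarrow> real)
    \<Rightarrow> nat \<Rightarrow> (nat \<Rightarrow> 'x) \<Rightarrow> (nat \<Rightarrow> real) \<Rightarrow> nat \<Rightarrow> 'x \<Rightarrow> real" where
  "gd_iter K V' \<eta> m xs ys t = gd_aux K V' \<eta> m xs ys (t - 1)"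

end

theory Submission
  imports Defs
begin


definition QB :: "('x \<Rightarrow> 'x \<Rightarrow> real) \<Rightarrow> (nat \<Rightarrow> 'x) \<Rightarrow> nat \<Rightarrow> (nat \<Rightarrow> real) \<Rightarrow> (nat \<Rightarrow> real) \<Rightarrow> real" where
 "QB K xs m a b = (\<Sum>i<m. \<Sum>k<m. a i * b k * K (xs i) (xs k))"

lemma QB_sym: "(\<forall>x y. K x y = K y x) \<Longrightarrow> QB K xs m a b = QB K xs m b a"
  unfolding QB_def by (subst sum.swap) (simp add: mult_ac)

lemma QB_eq_sum: "QB K xs m a b = (\<Sum>k<m. b k * (\<Sum>i<m. a i * K (xs i) (xs k)))"
  unfolding QB_def by (subst sum.swap) (simp add: sum_distrib_left mult_ac)

lemma QB_expand:
  assumes "\<forall>x y. K x y = K y x"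
  shows "QB K xs m (\<lambda>i. a i + s * b i) (\<lambda>i. a i + s * b i)
     = QB K xs m a a + 2 * s * QB K xs m a b + s^2 * QB K xs m b b"
proof -
  have "QB K xs m (\<lambda>i. a i + s * b i) (\<lambda>i. a i + s * b i)
     = QB K xs m a a + s * QB K xs m a b + s * QB K xs m b a + s^2 * QB K xs m b b"
    unfolding QB_def by (simp add: algebra_simps sum.distrib sum_distrib_left power2_eq_square)
  then show ?thesis using QB_sym[OF assms, of xs m b a] by simp
qed

lemma QB_psd: assumes "reproducing_kernel K" shows "0 \<le> QB K xs m c c"
proof -
  have H: "\<And>ps (cs::real list). length cs = length ps \<Longrightarrow> 0 \<le> (\<Sum>i<length ps. \<Sum>j<length ps. cs!i * cs!j * K (ps!i) (ps!j))"
    using assms unfolding reproducing_kernel_def by blast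
  have "0 \<le> (\<Sum>i<length (map xs [0..<m]). \<Sum>j<length (map xs [0..<m]). (map c [0..<m])!i * (map c [0..<m])!j * K ((map xs [0..<m])!i) ((map xs [0..<m])!j))"
    by (rule H) simp
  also have "\<dots> = QB K xs m c c" unfolding QB_def by (intro sum.cong refl) (auto simp: nth_map)
  finally show ?thesis .
qed

lemma disc: fixes aa dd cc :: real assumes h: "\<forall>s. 0 \<le> aa + 2 * s * dd + s^2 * cc" and "0 \<le> cc" shows "dd^2 \<le> aa*cc"
proof (cases "cc = 0")
  case True
  show ?thesis
  proof (rule ccontr)
    assume "\<not> ?thesis" then have "dd \<noteq> 0" using True by simp
    have "0 \<le> aa + 2*(-(aa+1)/(2*dd))*dd" using h[rule_format, of "-(aa+1)/(2*dd)"] True by simp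
    also have "\<dots> = -1" using \<open>dd \<noteq> 0\<close> by (simp add: field_simps)
    finally show False by simp
  qed
next
  case False
  then have cc: "cc > 0" using assms by simp
  have "0 \<le> aa + 2*(-dd/cc)*dd + (-dd/cc)^2*cc" using h by blast
  also have "\<dots> = aa - dd^2/cc" using cc by (simp add: field_simps power2_eq_square)
  finally show ?thesis using cc by (simp add: field_simps)
qed

lemma dl: "(x::real) * (if P then 1 else 0) = (if P then x else 0)" "(if P then 1 else 0) * (x::real) = (if P then x else 0)" by auto

lemma QB_CS:
  assumes sym: "\<forall>x y. K x y = K y x" and psd: "reproducing_kernel K" and j: "j < m"
  shows "(\<Sum>i<m. g i * K (xs i) (xs j))^2 \<le> QB K xs m g g * K (xs j) (xs j)"
proof -
  define e where "e = (\<lambda>i::nat. if i = j then (1::real) else 0)"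
  have d1: "\<And>x y::real. x * (if P then 1 else 0) * y = (if P then x * y else 0)" for P by simp
  have d2: "\<And>y::real. (if P then 1 else 0) * y = (if P then y else 0)" for P by simp
  have ge: "QB K xs m g e = (\<Sum>i<m. g i * K (xs i) (xs j))"
    unfolding QB_def e_def using j by (simp only: d1 sum.delta finite_lessThan lessThan_iff if_True)
  have ee: "QB K xs m e e = K (xs j) (xs j)"
    unfolding QB_def e_def using j by (simp only: dl) (simp add: if_distrib[where f="\<lambda>x. x * _"] cong: if_cong)
  have "\<forall>s. 0 \<le> QB K xs m g g + 2 * s * QB K xs m g e + s^2 * QB K xs m e e"
    using QB_expand[OF sym] QB_psd[OF psd] by metis
  moreover have "0 \<le> QB K xs m e e" using QB_psd[OF psd] .
  ultimately show ?thesis using disc ge ee by metis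
qed

lemma descent:
  fixes \<phi> \<phi>' :: "real \<Rightarrow> real"
  assumes d: "\<And>u. (\<phi> has_real_derivative \<phi>' u) (at u)"
      and lip: "\<And>u v. \<bar>\<phi>' u - \<phi>' v\<bar> \<le> L * \<bar>u - v\<bar>"
  shows "\<phi> b \<le> \<phi> a + \<phi>' a * (b - a) + L/2 * (b-a)^2"
proof -
  define h where "h = (\<lambda>s. \<phi> (a + s*(b-a)) - s*\<phi>' a*(b-a) - L/2 * s^2 * (b-a)^2)"
  define h' where "h' = (\<lambda>s. \<phi>' (a + s*(b-a)) * (b-a) - \<phi>' a*(b-a) - L * s * (b-a)^2)"
  have D: "(h has_real_derivative h' s) (at s)" for s
  proof -
    have "((\<lambda>s. \<phi> (a + s*(b-a))) has_real_derivative \<phi>' (a + s*(b-a)) * (b-a)) (at s)"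
      by (rule DERIV_chain2[OF d]) (auto intro!: derivative_eq_intros)
    then show ?thesis unfolding h_def h'_def
      by (auto intro!: derivative_eq_intros simp: power2_eq_square)
  qed
  obtain z where z: "0 < z" "z < 1" "h 1 - h 0 = (1 - 0) * h' z"
    using MVT2[of 0 1 h h'] D by auto
  have "(\<phi>' (a + z*(b-a)) - \<phi>' a) * (b-a) \<le> \<bar>\<phi>' (a + z*(b-a)) - \<phi>' a\<bar> * \<bar>b-a\<bar>"
    by (metis abs_ge_self abs_mult)
  also have "\<dots> \<le> L * \<bar>z*(b-a)\<bar> * \<bar>b-a\<bar>"
    using lip[of "a + z*(b-a)" a] by (simp add: mult_right_mono)
  also have "\<dots> = L * z * (b-a)^2" using z by (simp add: abs_mult power2_eq_square)
  finally have "h' z \<le> 0" unfolding h'_def by (simp add: algebra_simps)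
  then have "h 1 \<le> h 0" using z by simp
  then show ?thesis unfolding h_def by (simp add: algebra_simps)
qed


lemma powr_sum_bound: fixes \<theta>::real assumes "0\<le>\<theta>" "\<theta><1"
  shows "(\<Sum>k=1..t. real k powr (-\<theta>)) \<le> real t powr (1-\<theta>) / (1-\<theta>)"
proof (induction t)
  case 0 then show ?case by simp
next
  case (Suc t)
  have key: "(1-\<theta>) * real (Suc t) powr (-\<theta>) \<le> real (Suc t) powr (1-\<theta>) - real t powr (1-\<theta>)"
  proof (cases "t = 0")
    case True then show ?thesis using assms by simp
  next
    case False
    have "\<And>x. real t \<le> x \<Longrightarrow> x \<le> real (Suc t) \<Longrightarrow> ((\<lambda>z. z powr (1-\<theta>)) has_real_derivative (1-\<theta>) * x powr (1-\<theta>-1)) (at x)"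
      using False by (intro has_real_derivative_powr) auto
    from MVT2[of "real t" "real (Suc t)" "\<lambda>z. z powr (1-\<theta>)", OF _ this]
    obtain z where z: "real t < z" "z < real (Suc t)"
       "real (Suc t) powr (1-\<theta>) - real t powr (1-\<theta>) = (real (Suc t) - real t) * ((1-\<theta>) * z powr (1-\<theta>-1))"
      using MVT2[of "real t" "real (Suc t)" "\<lambda>z. z powr (1-\<theta>)"] by auto
    have "real (Suc t) powr (-\<theta>) \<le> z powr (-\<theta>)"
      using z False assms by (intro powr_mono2') auto
    then show ?thesis using z assms by (simp add: mult_left_mono)
  qed
  have "(\<Sum>k=1..Suc t. real k powr (-\<theta>)) = (\<Sum>k=1..t. real k powr (-\<theta>)) + real (Suc t) powr (-\<theta>)"
    by simp
  also have "\<dots> \<le> real t powr (1-\<theta>) / (1-\<theta>) + real (Suc t) powr (-\<theta>)" using Suc by simp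
  also have "\<dots> \<le> real (Suc t) powr (1-\<theta>) / (1-\<theta>)"
  proof -
    have "real (Suc t) powr (-\<theta>) \<le> (real (Suc t) powr (1-\<theta>) - real t powr (1-\<theta>)) / (1-\<theta>)"
      using key assms by (simp add: pos_le_divide_eq mult.commute)
    then show ?thesis by (simp add: diff_divide_distrib)
  qed
  finally show ?case .
qed




lemma quad_rep:
  assumes sym: "\<forall>x y. K x y = K y x"
  shows "(\<Sum>i<length ps. \<Sum>j<length ps. cs!i * cs!j * K (ps!i) (ps!j))
       = (\<Sum>i<length ps. cs!i * kernel_comb K ps cs (ps!i))"
proof (intro sum.cong refl)
  fix i
  have "(\<Sum>j<length ps. cs!i * cs!j * K (ps!i) (ps!j)) = (\<Sum>j<length ps. cs!i * (cs!j * K (ps!j) (ps!i)))"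
    using sym by (intro sum.cong refl) (metis mult.assoc)
  then show "(\<Sum>j<length ps. cs!i * cs!j * K (ps!i) (ps!j)) = cs!i * kernel_comb K ps cs (ps!i)"
    unfolding kernel_comb_def by (simp add: sum_distrib_left)
qed

lemma rkhs_norm_comb:
  assumes sym: "\<forall>x y. K x y = K y x"
  shows "rkhs_norm K (\<lambda>x. \<Sum>i<m. c i * K (xs i) x) = sqrt (QB K xs m c c)"
proof -
  define f where "f = (\<lambda>x. \<Sum>i<m. c i * K (xs i) x)"
  have Qf: "QB K xs m c c = (\<Sum>k<m. c k * f (xs k))"
    unfolding QB_eq_sum f_def by simp
  let ?S = "{(\<Sum>i<length ps. \<Sum>j<length ps. cs!i * cs!j * K (ps!i) (ps!j)) | ps cs.
       length cs = length ps \<and> f = kernel_comb K ps cs}"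
  have "?S = {QB K xs m c c}"
  proof
    show "?S \<subseteq> {QB K xs m c c}"
    proof
      fix v assume "v \<in> ?S"
      then obtain ps cs where v: "v = (\<Sum>i<length ps. \<Sum>j<length ps. cs!i * cs!j * K (ps!i) (ps!j))"
        and fe: "f = kernel_comb K ps cs" by blast
      have "v = (\<Sum>i<length ps. cs!i * f (ps!i))" using v quad_rep[OF sym] fe by simp
      also have "\<dots> = (\<Sum>i<length ps. \<Sum>k<m. cs!i * (c k * K (xs k) (ps!i)))"
        unfolding f_def by (simp add: sum_distrib_left)
      also have "\<dots> = (\<Sum>k<m. \<Sum>i<length ps. c k * (cs!i * K (ps!i) (xs k)))"
        by (subst sum.swap) (intro sum.cong refl, metis sym mult.left_commute)
      also have "\<dots> = (\<Sum>k<m. c k * f (xs k))"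
        unfolding fe kernel_comb_def by (simp add: sum_distrib_left)
      finally show "v \<in> {QB K xs m c c}" using Qf by simp
    qed
  next
    have "kernel_comb K (map xs [0..<m]) (map c [0..<m]) = f"
      unfolding kernel_comb_def f_def by (rule ext, intro sum.cong refl) (auto simp: nth_map)
    moreover have "(\<Sum>i<length (map xs [0..<m]). \<Sum>j<length (map xs [0..<m]). (map c [0..<m])!i * (map c [0..<m])!j * K ((map xs [0..<m])!i) ((map xs [0..<m])!j)) = QB K xs m c c"
      unfolding QB_def by (intro sum.cong refl) (auto simp: nth_map)
    ultimately have "\<exists>ps cs. QB K xs m c c = (\<Sum>i<length ps. \<Sum>j<length ps. cs!i * cs!j * K (ps!i) (ps!j)) \<and>
       length cs = length ps \<and> f = kernel_comb K ps cs"
      by (intro exI[of _ "map xs [0..<m]"] exI[of _ "map c [0..<m]"]) simp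
    then show "{QB K xs m c c} \<subseteq> ?S" by blast
  qed
  then show ?thesis unfolding rkhs_norm_def f_def by simp
qed

primrec coef :: "('x \<Rightarrow> 'x \<Rightarrow> real) \<Rightarrow> (real \<Rightarrow> real \<Rightarrow> real) \<Rightarrow> (nat \<Rightarrow> real)
    \<Rightarrow> nat \<Rightarrow> (nat \<Rightarrow> 'x) \<Rightarrow> (nat \<Rightarrow> real) \<Rightarrow> nat \<Rightarrow> nat \<Rightarrow> real" where
  "coef K V' \<eta> m xs ys 0 = (\<lambda>i. 0)"
| "coef K V' \<eta> m xs ys (Suc n) = (\<lambda>i. coef K V' \<eta> m xs ys n i
     - \<eta> (Suc n) * ((1 / real m) * V' (ys i) (gd_aux K V' \<eta> m xs ys n (xs i))))"

lemma gd_aux_comb: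
  "gd_aux K V' \<eta> m xs ys n = (\<lambda>x. \<Sum>i<m. coef K V' \<eta> m xs ys n i * K (xs i) x)"
proof (induction n)
  case 0 then show ?case by simp
next
  case (Suc n)
  show ?case
    by (rule ext) (simp add: Suc algebra_simps sum_subtractf sum_distrib_left sum_divide_distrib)
qed



lemma step:
  assumes sym: "\<forall>x y. K x y = K y x" and psd: "reproducing_kernel K"
    and Kb: "\<And>x. K x x \<le> \<kappa>^2"
    and Vn: "\<And>a b. 0 \<le> V a b" and Vc: "\<And>y. convex_on UNIV (V y)"
    and m: "0 < m" and yY: "\<And>i. i<m \<Longrightarrow> ys i \<in> Y"
    and V0: "\<And>y. y\<in>Y \<Longrightarrow> V y 0 \<le> V0"
    and Vd: "\<And>y u. y\<in>Y \<Longrightarrow> (V y has_real_derivative V' y u) (at u)"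
    and lip: "\<And>y u v. y \<in> Y \<Longrightarrow> \<bar>V' y u - V' y v\<bar> \<le> L * \<bar>u - v\<bar>"
    and Lp: "0 < L" and ep: "0 < \<eta> (Suc n)" and el: "\<eta> (Suc n) * (L * \<kappa>^2) \<le> 1"
  shows "QB K xs m (coef K V' \<eta> m xs ys (Suc n)) (coef K V' \<eta> m xs ys (Suc n))
      \<le> QB K xs m (coef K V' \<eta> m xs ys n) (coef K V' \<eta> m xs ys n) + 2 * \<eta> (Suc n) * V0"
proof -
  define a where "a = coef K V' \<eta> m xs ys n"
  define f where "f = gd_aux K V' \<eta> m xs ys n"
  define f' where "f' = gd_aux K V' \<eta> m xs ys (Suc n)"
  define e where "e = \<eta> (Suc n)"
  define g where "g = (\<lambda>i. (1 / real m) * V' (ys i) (f (xs i)))"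
  define d where "d = (\<lambda>j. \<Sum>i<m. g i * K (xs i) (xs j))"
  define E where "E = (\<lambda>h. (1/real m) * (\<Sum>j<m. V (ys j) (h (xs j))))"
  define Q where "Q = QB K xs m g g"
  define B where "B = QB K xs m a g"
  have a': "coef K V' \<eta> m xs ys (Suc n) = (\<lambda>i. a i + (-e) * g i)"
    by (simp add: a_def e_def g_def f_def fun_eq_iff)
  have fx: "\<And>x. f x = (\<Sum>i<m. a i * K (xs i) x)" using gd_aux_comb unfolding f_def a_def by metis
  have f'x: "\<And>j. f' (xs j) = f (xs j) - e * d j"
    by (simp add: f'_def f_def e_def d_def g_def sum_distrib_left mult_ac)
  have Q0: "0 \<le> Q" unfolding Q_def by (rule QB_psd[OF psd])
  have N': "QB K xs m (coef K V' \<eta> m xs ys (Suc n)) (coef K V' \<eta> m xs ys (Suc n))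
      = QB K xs m a a - 2 * e * B + e^2 * Q"
    unfolding a' QB_expand[OF sym] B_def Q_def by simp
  have Bs: "B = (\<Sum>k<m. g k * f (xs k))" unfolding B_def QB_eq_sum fx by simp
  have conv: "g k * f (xs k) \<ge> (1/real m) * (V (ys k) (f (xs k)) - V (ys k) 0)" if k: "k \<in> {..<m}" for k
  proof -
    have "V (ys k) 0 - V (ys k) (f (xs k)) \<ge> V' (ys k) (f (xs k)) * (0 - f (xs k))"
      using convex_on_imp_above_tangent[of UNIV "V (ys k)" "f (xs k)" 0 "V' (ys k) (f (xs k))"]
        Vc Vd[OF yY] k by auto
    then have "(1/real m) * (V (ys k) (f (xs k)) - V (ys k) 0) \<le> (1/real m) * (V' (ys k) (f (xs k)) * f (xs k))"
      by (intro mult_left_mono) auto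
    then show ?thesis unfolding g_def by (simp add: mult_ac)
  qed
  have "B \<ge> (\<Sum>k<m. (1/real m) * (V (ys k) (f (xs k)) - V (ys k) 0))"
    unfolding Bs by (rule sum_mono) (rule conv, assumption)
  also have "(\<Sum>k<m. (1/real m) * (V (ys k) (f (xs k)) - V (ys k) 0))
      = E f - (1/real m) * (\<Sum>k<m. V (ys k) 0)"
    unfolding E_def by (simp add: sum_subtractf right_diff_distrib sum_divide_distrib)
  finally have B1: "B \<ge> E f - (1/real m) * (\<Sum>k<m. V (ys k) 0)" .
  have "(\<Sum>k<m. V (ys k) 0) \<le> real m * V0"
    using sum_bounded_above[of "{..<m}" "\<lambda>k. V (ys k) 0" V0] V0 yY by simp
  then have "(1/real m) * (\<Sum>k<m. V (ys k) 0) \<le> V0" using m by (simp add: field_simps)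
  with B1 have B2: "B \<ge> E f - V0" by simp
  have desc: "V (ys j) (f' (xs j)) \<le> V (ys j) (f (xs j)) + V' (ys j) (f (xs j)) * (- e * d j) + L/2 * (e^2 * (d j)^2)"
    if j: "j < m" for j
    using descent[of "V (ys j)" "V' (ys j)" L "f' (xs j)" "f (xs j)"] Vd[OF yY[OF j]] lip[OF yY[OF j]] f'x[of j]
    by (simp add: power_mult_distrib)
  have dQ: "(d j)^2 \<le> Q * \<kappa>^2" if j: "j < m" for j
  proof -
    have "(d j)^2 \<le> Q * K (xs j) (xs j)" unfolding d_def Q_def by (rule QB_CS[OF sym psd j])
    also have "\<dots> \<le> Q * \<kappa>^2" using Q0 Kb by (simp add: mult_left_mono)
    finally show ?thesis .
  qed
  have gd: "(\<Sum>j<m. g j * d j) = Q" unfolding Q_def QB_eq_sum d_def by simp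
  have Xb: "(1/real m) * (\<Sum>j<m. (d j)^2) \<le> Q * \<kappa>^2"
  proof -
    have "(\<Sum>j<m. (d j)^2) \<le> real m * (Q * \<kappa>^2)"
      using sum_bounded_above[of "{..<m}" "\<lambda>j. (d j)^2" "Q * \<kappa>^2"] dQ by simp
    then show ?thesis using m by (simp add: field_simps)
  qed
  have "E f' \<le> (1/real m) * (\<Sum>j<m. V (ys j) (f (xs j)) + V' (ys j) (f (xs j)) * (- e * d j) + L/2 * (e^2 * (d j)^2))"
    unfolding E_def using m by (intro mult_left_mono sum_mono desc) auto
  also have "\<dots> = E f - e * (\<Sum>j<m. g j * d j) + L/2 * e^2 * ((1/real m) * (\<Sum>j<m. (d j)^2))"
    unfolding E_def g_def
    by (simp add: sum.distrib sum_distrib_left right_diff_distrib distrib_left mult_ac sum_negf sum_subtractf)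
  also have "E f - e * (\<Sum>j<m. g j * d j) + L/2 * e^2 * ((1/real m) * (\<Sum>j<m. (d j)^2))
      \<le> E f - e * Q + L/2 * e^2 * (Q * \<kappa>^2)"
    unfolding gd using mult_left_mono[OF Xb, of "L/2*e^2"] Lp by simp
  finally have D1: "E f' \<le> E f - e * Q + L/2 * e^2 * (Q * \<kappa>^2)" .
  have "e * (L * \<kappa>^2) * (e * Q) \<le> 1 * (e * Q)"
    using el ep Q0 unfolding e_def by (intro mult_right_mono) auto
  then have D2: "L * e^2 * (Q * \<kappa>^2) \<le> e * Q" by (simp add: power2_eq_square mult_ac)
  have Ef0: "0 \<le> E f'" unfolding E_def using m Vn by (simp add: sum_nonneg)
  have "e * (e * Q) \<le> e * (2 * (E f - E f'))" using D1 D2 ep unfolding e_def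
    by (intro mult_left_mono) auto
  moreover have "e * B \<ge> e * (E f - V0)" using B2 ep unfolding e_def by (intro mult_left_mono) auto
  moreover have "e * E f' \<ge> 0" using Ef0 ep unfolding e_def by simp
  ultimately show ?thesis unfolding N' a_def[symmetric] e_def[symmetric]
    by (simp add: power2_eq_square algebra_simps)
qed



lemma part1:
  assumes sym: "\<forall>x y. K x y = K y x" and psd: "reproducing_kernel K"
    and Kb: "\<And>x. K x x \<le> \<kappa>^2"
    and Vn: "\<And>a b. 0 \<le> V a b" and Vc: "\<And>y. convex_on UNIV (V y)"
    and m: "0 < m" and yY: "\<And>i. i<m \<Longrightarrow> ys i \<in> Y"
    and V0: "\<And>y. y\<in>Y \<Longrightarrow> V y 0 \<le> V0"
    and Vd: "\<And>y u. y\<in>Y \<Longrightarrow> (V y has_real_derivative V' y u) (at u)"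
    and lip: "\<And>y u v. y \<in> Y \<Longrightarrow> \<bar>V' y u - V' y v\<bar> \<le> L * \<bar>u - v\<bar>"
    and Lp: "0 < L" and eta: "\<forall>t\<ge>1. 0 < \<eta> t \<and> \<eta> t * (L * \<kappa>\<^sup>2) \<le> 1"
  shows "QB K xs m (coef K V' \<eta> m xs ys n) (coef K V' \<eta> m xs ys n) \<le> 2 * V0 * (\<Sum>k=1..n. \<eta> k)"
proof (induction n)
  case 0 then show ?case by (simp add: QB_def)
next
  case (Suc n)
  have "QB K xs m (coef K V' \<eta> m xs ys (Suc n)) (coef K V' \<eta> m xs ys (Suc n))
      \<le> QB K xs m (coef K V' \<eta> m xs ys n) (coef K V' \<eta> m xs ys n) + 2 * \<eta> (Suc n) * V0"
    by (rule step[OF sym psd Kb Vn Vc m yY V0 Vd lip Lp]) (use eta in auto)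
  also have "\<dots> \<le> 2 * V0 * (\<Sum>k=1..n. \<eta> k) + 2 * \<eta> (Suc n) * V0" using Suc by simp
  also have "\<dots> = 2 * V0 * (\<Sum>k=1..Suc n. \<eta> k)" by (simp add: algebra_simps)
  finally show ?case .
qed

theorem mainTheorem15:
  fixes K :: "'x::metric_space \<Rightarrow> 'x \<Rightarrow> real"
    and V V' :: "real \<Rightarrow> real \<Rightarrow> real"
    and Y :: "real set"
    and m :: nat and xs :: "nat \<Rightarrow> 'x" and ys :: "nat \<Rightarrow> real"
    and L \<kappa> V0 :: real
  assumes separable: "\<exists>D::'x set. countable D \<and> closure D = UNIV"
    and V_meas: "(\<lambda>(a, b). V a b) \<in> borel_measurable borel"
    and V_nonneg: "\<And>a b. 0 \<le> V a b"
    and V_convex: "\<And>y. convex_on UNIV (V y)"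
    and K_kernel: "reproducing_kernel K"
    and m_pos: "0 < m"
    and sample_Y: "\<And>i. i < m \<Longrightarrow> ys i \<in> Y"
    and kappa_bdd: "bdd_above (range (\<lambda>x. sqrt (K x x)))"
    and kappa_def: "\<kappa> = (SUP x. sqrt (K x x))"
    and V0_bdd: "bdd_above ((\<lambda>y. V y 0) ` Y)"
    and V0_def: "V0 = (SUP y\<in>Y. V y 0)"
    and V_deriv: "\<And>y u. y \<in> Y \<Longrightarrow> (V y has_real_derivative V' y u) (at u)"
    and L_pos: "0 < L"
    and V'_lip: "\<And>y u v. y \<in> Y \<Longrightarrow> \<bar>V' y u - V' y v\<bar> \<le> L * \<bar>u - v\<bar>"
  shows
    "(\<forall>\<eta> :: nat \<Rightarrow> real.
        (\<forall>t\<ge>1. 0 < \<eta> t \<and> \<eta> t * (L * \<kappa>\<^sup>2) \<le> 1) \<longrightarrow>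
        (\<forall>t\<ge>1. rkhs_norm K (gd_iter K V' \<eta> m xs ys (t + 1))
                 \<le> sqrt (2 * V0 * (\<Sum>k=1..t. \<eta> k))))
     \<and>
     (\<forall>(\<theta>::real) (\<eta>1::real).
        0 \<le> \<theta> \<and> \<theta> < 1 \<and> 0 < \<eta>1 \<and> \<eta>1 * (2 * V0) \<le> 1 - \<theta> \<and> \<eta>1 * (L * \<kappa>\<^sup>2) \<le> 1 \<longrightarrow>
        (\<forall>t\<ge>1. rkhs_norm K (gd_iter K V' (\<lambda>k. \<eta>1 * real k powr (- \<theta>)) m xs ys (t + 1))
                 \<le> real t powr ((1 - \<theta>) / 2)))"
proof -
  have sym: "\<forall>x y. K x y = K y x" using K_kernel unfolding reproducing_kernel_def by blast
  have Kpos: "0 \<le> K x x" for x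
  proof -
    have "0 \<le> (\<Sum>i<length [x]. \<Sum>j<length [x]. [1::real]!i * [1]!j * K ([x]!i) ([x]!j))"
    proof -
      have H: "\<And>ps (cs::real list). length cs = length ps \<Longrightarrow> 0 \<le> (\<Sum>i<length ps. \<Sum>j<length ps. cs!i * cs!j * K (ps!i) (ps!j))"
        using K_kernel unfolding reproducing_kernel_def by blast
      show ?thesis by (rule H) simp
    qed
    then show ?thesis by simp
  qed
  have Kb: "K x x \<le> \<kappa>^2" for x
  proof -
    have "sqrt (K x x) \<le> \<kappa>" unfolding kappa_def by (rule cSUP_upper[OF _ kappa_bdd]) simp
    then have "(sqrt (K x x))^2 \<le> \<kappa>^2" using Kpos[of x] by (intro power_mono) auto
    then show ?thesis using Kpos[of x] by simp
  qed
  have V0b: "V y 0 \<le> V0" if "y \<in> Y" for y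
    unfolding V0_def by (rule cSUP_upper[OF that V0_bdd])
  have V0nn: "0 \<le> V0" using V0b[OF sample_Y[OF m_pos]] V_nonneg[of "ys 0" 0] by linarith
  have norm_eq: "rkhs_norm K (gd_iter K V' \<eta> m xs ys (t + 1)) = sqrt (QB K xs m (coef K V' \<eta> m xs ys t) (coef K V' \<eta> m xs ys t))"
    for \<eta> t
  proof -
    have "gd_iter K V' \<eta> m xs ys (t + 1) = gd_aux K V' \<eta> m xs ys t" by (simp add: gd_iter_def)
    then show ?thesis unfolding gd_aux_comb[of K V' \<eta> m xs ys t] by (simp only: rkhs_norm_comb[OF sym])
  qed
  have P1: "\<forall>\<eta> :: nat \<Rightarrow> real.
        (\<forall>t\<ge>1. 0 < \<eta> t \<and> \<eta> t * (L * \<kappa>\<^sup>2) \<le> 1) \<longrightarrow>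
        (\<forall>t\<ge>1. rkhs_norm K (gd_iter K V' \<eta> m xs ys (t + 1))
                 \<le> sqrt (2 * V0 * (\<Sum>k=1..t. \<eta> k)))"
  proof (intro allI impI)
    fix \<eta> :: "nat \<Rightarrow> real" and t :: nat
    assume eta: "\<forall>t\<ge>1. 0 < \<eta> t \<and> \<eta> t * (L * \<kappa>\<^sup>2) \<le> 1"
    show "rkhs_norm K (gd_iter K V' \<eta> m xs ys (t + 1)) \<le> sqrt (2 * V0 * (\<Sum>k=1..t. \<eta> k))"
      unfolding norm_eq
      by (rule real_sqrt_le_mono, rule part1[OF sym K_kernel Kb V_nonneg V_convex m_pos sample_Y V0b V_deriv V'_lip L_pos eta])
  qed
  have P2: "\<forall>(\<theta>::real) (\<eta>1::real).
        0 \<le> \<theta> \<and> \<theta> < 1 \<and> 0 < \<eta>1 \<and> \<eta>1 * (2 * V0) \<le> 1 - \<theta> \<and> \<eta>1 * (L * \<kappa>\<^sup>2) \<le> 1 \<longrightarrow>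
        (\<forall>t\<ge>1. rkhs_norm K (gd_iter K V' (\<lambda>k. \<eta>1 * real k powr (- \<theta>)) m xs ys (t + 1))
                 \<le> real t powr ((1 - \<theta>) / 2))"
  proof (intro allI impI)
    fix \<theta> \<eta>1 :: real and t :: nat
    assume H: "0 \<le> \<theta> \<and> \<theta> < 1 \<and> 0 < \<eta>1 \<and> \<eta>1 * (2 * V0) \<le> 1 - \<theta> \<and> \<eta>1 * (L * \<kappa>\<^sup>2) \<le> 1"
      and t: "1 \<le> t"
    define \<eta> where "\<eta> = (\<lambda>k::nat. \<eta>1 * real k powr (- \<theta>))"
    have eta: "\<forall>t\<ge>1. 0 < \<eta> t \<and> \<eta> t * (L * \<kappa>\<^sup>2) \<le> 1"
    proof (intro allI impI conjI)
      fix s :: nat assume s: "1 \<le> s"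
      show "0 < \<eta> s" unfolding \<eta>_def using H s by simp
      have "real s powr (- \<theta>) \<le> 1" using powr_mono2'[of "-\<theta>" 1 "real s"] s H by simp
      moreover have "0 \<le> L * \<kappa>^2" using L_pos by simp
      ultimately have "\<eta> s * (L * \<kappa>\<^sup>2) \<le> \<eta>1 * (L * \<kappa>\<^sup>2)"
        unfolding \<eta>_def using H by (intro mult_right_mono) (auto intro: mult_left_le)
      then show "\<eta> s * (L * \<kappa>\<^sup>2) \<le> 1" using H by linarith
    qed
    have "rkhs_norm K (gd_iter K V' \<eta> m xs ys (t + 1)) \<le> sqrt (2 * V0 * (\<Sum>k=1..t. \<eta> k))"
      using P1 eta t by blast
    also have "2 * V0 * (\<Sum>k=1..t. \<eta> k) = (\<eta>1 * (2 * V0)) * (\<Sum>k=1..t. real k powr (- \<theta>))"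
      unfolding \<eta>_def by (simp add: sum_distrib_left mult_ac)
    also have "\<dots> \<le> (1 - \<theta>) * (real t powr (1-\<theta>) / (1-\<theta>))"
      using H powr_sum_bound[of \<theta> t] by (intro mult_mono) (auto intro: sum_nonneg)
    also have "\<dots> = real t powr (1-\<theta>)" using H by simp
    finally show "rkhs_norm K (gd_iter K V' (\<lambda>k. \<eta>1 * real k powr (- \<theta>)) m xs ys (t + 1)) \<le> real t powr ((1 - \<theta>) / 2)"
      unfolding \<eta>_def by (simp add: powr_half_sqrt_powr)
  qed
  show ?thesis using P1 P2 by blast
qed

end
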